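(* Let $B_n=F(0,1,2,\ldots,n-1)$. For all $0\le k\le n$, $$\mathbf{cf}_{n,k}(p,q)=\mathbf{fT}_{n-k}(B_n,p,q)\qquad\text{and}\qquad \mathbf{Sf}_{n,k}(p,q)=\mathbf{rT}_{n-k}(B_n,p,q).$$
   Context: For $m\ge 1$, a Fibonacci tiling of height $m$ is a tiling of a column of height $m$ by tiles of height 1 and 2 whose bottom-most tile has height 1; $F_m(p,q)=\sum_T q^{\mathrm{one}(T)}p^{\mathrm{two}(T)}$ over such tilings, where $\mathrm{one}(T),\mathrm{two}(T)$ count tiles of height 1, 2 (so $F_1=q$, $F_2=q^2$, $F_m=qF_{m-1}+pF_{m-2}$); there are no tilings of height 0 and $F_0(p,q)=0$. Let $(x)_{\downarrow_{F,p,q,0}}=(x)_{\uparrow_{F,p,q,0}}=1$ and for $k\ge1$, $(x)_{\downarrow_{F,p,q,k}}=x(x-F_1(p,q))\cdots(x-F_{k-1}(p,q))$, $(x)_{\uparrow_{F,p,q,k}}=x(x+F_1(p,q))\cdots(x+F_{k-1}(p,q))$. Define $\mathbf{Sf}_{n,k}(p,q)$ and $\mathbf{cf}_{n,k}(p,q)$ ($0\le k\le n$) by $x^n=\sum_{k=0}^n\mathbf{Sf}_{n,k}(p,q)(x)_{\downarrow_{F,p,q,k}}$ and $(x)_{\uparrow_{F,p,q,n}}=\sum_{k=0}^n\mathbf{cf}_{n,k}(p,q)x^k$. A Ferrers board $F(b_1,\ldots,b_n)$ has column heights $b_1,\ldots,b_n$ from left to right. A Fibonacci file placement of $k$ tilings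 in it is a choice of columns $i_1<\cdots<i_k$ with a Fibonacci tiling of height $b_{i_j}$ in column $i_j$; a Fibonacci rook placement of $k$ tilings is a choice of columns $i_1<\cdots<i_k$ with a Fibonacci tiling of height $b_{i_s-(s-1)}$ in column $i_s$ for each $s$. The weight of a placement is $q^ap^b$ with $a,b$ the total numbers of tiles of height 1, 2. $\mathbf{fT}_k(B,p,q)$ and $\mathbf{rT}_k(B,p,q)$ are the sums of the weights of all file, respectively rook, placements of $k$ tilings (the empty placement has weight 1). *)

theory Defs
  imports "HOL-Computational_Algebra.Polynomial" "HOL-Library.FuncSet"
begin

text \<open>Fibonacci tilings of a column of height m: lists of tile heights (each 1 or 2),
  listed from bottom to top, summing to m, whose bottom-most tile has height 1.\<close>
definition fib_tilings :: "nat \<Rightarrow> nat list set" where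
  "fib_tilings m = {ts. set ts \<subseteq> {1,2} \<and> sum_list ts = m \<and> ts \<noteq> [] \<and> hd ts = 1}"

definition tile_weight :: "'a::comm_ring_1 \<Rightarrow> 'a \<Rightarrow> nat list \<Rightarrow> 'a" where
  "tile_weight p q ts = q ^ count_list ts 1 * p ^ count_list ts 2"

definition Fib :: "'a::comm_ring_1 \<Rightarrow> 'a \<Rightarrow> nat \<Rightarrow> 'a" where
  "Fib p q m = (\<Sum>ts\<in>fib_tilings m. tile_weight p q ts)"

definition fall_F :: "'a::comm_ring_1 \<Rightarrow> 'a \<Rightarrow> nat \<Rightarrow> 'a poly" where
  "fall_F p q k = (\<Prod>i<k. [:- Fib p q i, 1:])"

definition rise_F :: "'a::comm_ring_1 \<Rightarrow> 'a \<Rightarrow> nat \<Rightarrow> 'a poly" where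
  "rise_F p q k = (\<Prod>i<k. [:Fib p q i, 1:])"

definition Sf :: "'a::comm_ring_1 \<Rightarrow> 'a \<Rightarrow> nat \<Rightarrow> nat \<Rightarrow> 'a" where
  "Sf p q n = (THE s. (\<forall>j>n. s j = 0) \<and>
      [:0, 1:] ^ n = (\<Sum>j\<le>n. smult (s j) (fall_F p q j)))"

definition cf :: "'a::comm_ring_1 \<Rightarrow> 'a \<Rightarrow> nat \<Rightarrow> nat \<Rightarrow> 'a" where
  "cf p q n k = coeff (rise_F p q n) k"

text \<open>A Ferrers board with n columns is given by n and a height function b,
  b i being the height of column i, for 1 \<le> i \<le> n.\<close>
definition file_placements :: "nat \<Rightarrow> (nat \<Rightarrow> nat) \<Rightarrow> nat \<Rightarrow> (nat set \<times> (nat \<Rightarrow> nat list)) set" where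
  "file_placements n b k = {(S, T). S \<subseteq> {1..n} \<and> card S = k \<and>
      T \<in> (\<Pi>\<^sub>E i\<in>S. fib_tilings (b i))}"

definition rook_placements :: "nat \<Rightarrow> (nat \<Rightarrow> nat) \<Rightarrow> nat \<Rightarrow> (nat set \<times> (nat \<Rightarrow> nat list)) set" where
  "rook_placements n b k = {(S, T). S \<subseteq> {1..n} \<and> card S = k \<and>
      T \<in> (\<Pi>\<^sub>E i\<in>S. fib_tilings (b (i - card {j\<in>S. j < i})))}"

definition placement_weight :: "'a::comm_ring_1 \<Rightarrow> 'a \<Rightarrow> nat set \<times> (nat \<Rightarrow> nat list) \<Rightarrow> 'a" where
  "placement_weight p q P = (\<Prod>i\<in>fst P. tile_weight p q (snd P i))"

definition fT :: "nat \<Rightarrow> (nat \<Rightarrow> nat) \<Rightarrow> nat \<Rightarrow> 'a::comm_ring_1 \<Rightarrow> 'a \<Rightarrow> 'a" where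
  "fT n b k p q = (\<Sum>P\<in>file_placements n b k. placement_weight p q P)"

definition rT :: "nat \<Rightarrow> (nat \<Rightarrow> nat) \<Rightarrow> nat \<Rightarrow> 'a::comm_ring_1 \<Rightarrow> 'a \<Rightarrow> 'a" where
  "rT n b k p q = (\<Sum>P\<in>rook_placements n b k. placement_weight p q P)"

text \<open>B_n = F(0,1,...,n-1): column i (1-based) has height i - 1.\<close>
definition staircase :: "nat \<Rightarrow> nat" where
  "staircase i = i - 1"

end

theory Submission
  imports Defs
begin

lemma fib_tilings_finite: "finite (fib_tilings m)"
proof -
  have len: "length ts \<le> sum_list ts" if "set ts \<subseteq> {1,2::nat}" for ts
    using that by (induction ts) auto
  have "fib_tilings m \<subseteq> {ts. set ts \<subseteq> {1,2} \<and> length ts \<le> m}"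
    unfolding fib_tilings_def using len by auto
  moreover have "finite {ts. set ts \<subseteq> {1,2::nat} \<and> length ts \<le> m}"
    by (rule finite_lists_length_le) auto
  ultimately show ?thesis by (rule finite_subset)
qed

definition sub :: "nat \<Rightarrow> nat \<Rightarrow> nat set set" where
  "sub n m = {S. S \<subseteq> {1..n} \<and> card S = m}"

lemma sub_finite: "finite (sub n m)"
  unfolding sub_def by (rule finite_subset[of _ "Pow {1..n}"]) auto

lemma sub_elem_finite: "S \<in> sub n m \<Longrightarrow> finite S"
  unfolding sub_def using finite_subset by auto

lemma place_sum:
  fixes p q :: "'a::comm_ring_1"
  shows "(\<Sum>P\<in>{(S, T). S \<in> sub n m \<and> T \<in> (\<Pi>\<^sub>E i\<in>S. fib_tilings (h S i))}. placement_weight p q P)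
       = (\<Sum>S\<in>sub n m. \<Prod>i\<in>S. Fib p q (h S i))"
proof -
  have eq: "{(S, T). S \<in> sub n m \<and> T \<in> (\<Pi>\<^sub>E i\<in>S. fib_tilings (h S i))}
      = Sigma (sub n m) (\<lambda>S. \<Pi>\<^sub>E i\<in>S. fib_tilings (h S i))" by auto
  have fin: "finite (\<Pi>\<^sub>E i\<in>S. fib_tilings (h S i))" if "S \<in> sub n m" for S
    using sub_elem_finite[OF that] fib_tilings_finite by (intro finite_PiE) auto
  have pw: "placement_weight p q = (\<lambda>(S,T). \<Prod>i\<in>S. tile_weight p q (T i))"
    unfolding placement_weight_def by auto
  have "(\<Sum>S\<in>sub n m. \<Prod>i\<in>S. Fib p q (h S i))
      = (\<Sum>S\<in>sub n m. \<Sum>T\<in>(\<Pi>\<^sub>E i\<in>S. fib_tilings (h S i)). \<Prod>i\<in>S. tile_weight p q (T i))"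
    unfolding Fib_def
    by (rule sum.cong, rule refl, rule prod_sum_PiE) (auto simp: sub_elem_finite fib_tilings_finite)
  also have "\<dots> = (\<Sum>(S,T)\<in>Sigma (sub n m) (\<lambda>S. \<Pi>\<^sub>E i\<in>S. fib_tilings (h S i)). \<Prod>i\<in>S. tile_weight p q (T i))"
    by (rule sum.Sigma) (auto simp: sub_finite fin)
  finally show ?thesis unfolding eq pw by simp
qed

lemma fT_sub: "fT n b m p q = (\<Sum>S\<in>sub n m. \<Prod>i\<in>S. Fib p q (b i))"
proof -
  have "file_placements n b m = {(S, T). S \<in> sub n m \<and> T \<in> (\<Pi>\<^sub>E i\<in>S. fib_tilings ((\<lambda>S i. b i) S i))}"
    unfolding file_placements_def sub_def by auto
  thus ?thesis unfolding fT_def using place_sum[where n=n and m=m and h="\<lambda>S i. b i" and p=p and q=q] by simp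
qed

lemma rT_sub: "rT n b m p q = (\<Sum>S\<in>sub n m. \<Prod>i\<in>S. Fib p q (b (i - card {j\<in>S. j < i})))"
proof -
  have "rook_placements n b m = {(S, T). S \<in> sub n m \<and> T \<in> (\<Pi>\<^sub>E i\<in>S. fib_tilings ((\<lambda>S i. b (i - card {j\<in>S. j < i})) S i))}"
    unfolding rook_placements_def sub_def by auto
  thus ?thesis unfolding rT_def using place_sum[where n=n and m=m and h="\<lambda>S i. b (i - card {j\<in>S. j < i})" and p=p and q=q] by simp
qed

lemma sub_0: "sub n 0 = {{}}"
proof -
  have "S = {}" if "S \<subseteq> {1..n}" "card S = 0" for S :: "nat set"
    using that finite_subset[OF that(1)] by simp
  thus ?thesis unfolding sub_def by auto
qed

lemma sub_big: "m > n \<Longrightarrow> sub n m = {}"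
proof -
  assume m: "m > n"
  have "card S \<le> n" if "S \<subseteq> {1..n}" for S :: "nat set"
    using card_mono[OF finite_atLeastAtMost that] by simp
  note c = this
  show ?thesis
  proof (rule equals0I)
    fix S assume "S \<in> sub n m"
    hence s1: "S \<subseteq> {1..n}" and s2: "card S = m" unfolding sub_def by auto
    have "card S \<le> n" by (rule c[OF s1])
    thus False using s2 m by simp
  qed
qed

lemma sub_Suc: "sub (Suc n) (Suc m) = sub n (Suc m) \<union> insert (Suc n) ` sub n m"
proof (intro equalityI subsetI)
  fix S assume S: "S \<in> sub (Suc n) (Suc m)"
  show "S \<in> sub n (Suc m) \<union> insert (Suc n) ` sub n m"
  proof (cases "Suc n \<in> S")
    case True
    have fS: "finite S" using S sub_elem_finite by blast
    have "S - {Suc n} \<in> sub n m" using S True fS unfolding sub_def by auto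
    moreover have "S = insert (Suc n) (S - {Suc n})" using True by auto
    ultimately show ?thesis by blast
  next
    case False
    then have "S \<in> sub n (Suc m)" using S unfolding sub_def by (force simp: subset_iff le_Suc_eq)
    thus ?thesis by blast
  qed
next
  fix S assume "S \<in> sub n (Suc m) \<union> insert (Suc n) ` sub n m"
  then show "S \<in> sub (Suc n) (Suc m)"
  proof
    assume "S \<in> sub n (Suc m)" thus ?thesis unfolding sub_def by auto
  next
    assume "S \<in> insert (Suc n) ` sub n m"
    then obtain S' where S': "S' \<in> sub n m" "S = insert (Suc n) S'" by blast
    have "finite S'" using S' sub_elem_finite by blast
    moreover have "Suc n \<notin> S'" using S' unfolding sub_def by auto
    ultimately show ?thesis using S' unfolding sub_def by auto
  qed
qed

lemma sum_sub_Suc: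
  fixes f :: "nat set \<Rightarrow> 'a::comm_ring_1"
  shows "(\<Sum>S\<in>sub (Suc n) (Suc m). f S) = (\<Sum>S\<in>sub n (Suc m). f S) + (\<Sum>S\<in>sub n m. f (insert (Suc n) S))"
proof -
  have disj: "sub n (Suc m) \<inter> insert (Suc n) ` sub n m = {}"
  proof (rule equals0I)
    fix S assume S: "S \<in> sub n (Suc m) \<inter> insert (Suc n) ` sub n m"
    hence "Suc n \<in> S" by blast
    moreover have "S \<subseteq> {1..n}" using S unfolding sub_def by blast
    ultimately show False by auto
  qed
  have inj: "inj_on (insert (Suc n)) (sub n m)"
  proof (rule inj_onI)
    fix x y assume "x \<in> sub n m" "y \<in> sub n m" "insert (Suc n) x = insert (Suc n) y"
    moreover have "x \<subseteq> {1..n}" "y \<subseteq> {1..n}" using calculation unfolding sub_def by blast+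
    moreover have "Suc n \<notin> x" "Suc n \<notin> y" using calculation by auto
    ultimately show "x = y" by (metis Diff_insert_absorb)
  qed
  have "(\<Sum>S\<in>sub (Suc n) (Suc m). f S) = (\<Sum>S\<in>sub n (Suc m). f S) + (\<Sum>S\<in>insert (Suc n) ` sub n m. f S)"
    unfolding sub_Suc by (rule sum.union_disjoint) (simp_all add: sub_finite disj)
  also have "(\<Sum>S\<in>insert (Suc n) ` sub n m. f S) = (\<Sum>S\<in>sub n m. f (insert (Suc n) S))"
    by (rule sum.reindex_cong[OF inj refl refl])
  finally show ?thesis .
qed


lemma Fib_0: "Fib p q 0 = 0"
proof -
  have "fib_tilings 0 = {}"
  proof -
    have "False" if "set ts \<subseteq> {1,2::nat}" "sum_list ts = 0" "ts \<noteq> []" for ts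
      using that by (cases ts) auto
    thus ?thesis unfolding fib_tilings_def by auto
  qed
  thus ?thesis unfolding Fib_def by simp
qed

definition lprod :: "(nat \<Rightarrow> 'a::comm_ring_1) \<Rightarrow> nat \<Rightarrow> 'a poly" where
  "lprod c k = (\<Prod>i<k. [:c i, 1:])"

lemma lprod_Suc: "lprod c (Suc k) = lprod c k * [:c k, 1:]"
  unfolding lprod_def by simp

lemma coeff_mult_lin0: "coeff ((P::'a::comm_ring_1 poly) * [:a, 1:]) 0 = a * coeff P 0"
  by (simp add: mult_pCons_right)

lemma coeff_mult_linS: "coeff ((P::'a::comm_ring_1 poly) * [:a, 1:]) (Suc j) = a * coeff P (Suc j) + coeff P j"
  by (simp add: mult_pCons_right)

lemma coeff_lprod_big: "j > k \<Longrightarrow> coeff (lprod c k) j = 0"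
proof (induction k arbitrary: j)
  case 0 thus ?case by (simp add: lprod_def coeff_1)
next
  case (Suc k)
  then obtain j' where j: "j = Suc j'" by (cases j) auto
  show ?case using Suc j by (simp add: lprod_Suc coeff_mult_linS)
qed

lemma coeff_lprod_top: "coeff (lprod c k) k = 1"
proof (induction k)
  case 0 thus ?case by (simp add: lprod_def)
next
  case (Suc k)
  thus ?case by (simp add: lprod_Suc coeff_mult_linS coeff_lprod_big)
qed

lemma lprod_indep:
  fixes d :: "nat \<Rightarrow> 'a::comm_ring_1"
  shows "(\<Sum>j\<le>n. smult (d j) (lprod c j)) = 0 \<Longrightarrow> j \<le> n \<Longrightarrow> d j = 0"
proof (induction n arbitrary: j)
  case 0 thus ?case by (simp add: lprod_def)
next
  case (Suc n)
  have z: "coeff (\<Sum>j\<le>n. smult (d j) (lprod c j)) (Suc n) = 0"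
    by (simp add: coeff_sum coeff_lprod_big)
  have "coeff (\<Sum>j\<le>Suc n. smult (d j) (lprod c j)) (Suc n) = d (Suc n)"
    by (simp only: sum.atMost_Suc coeff_add z) (simp add: coeff_lprod_top)
  moreover have "coeff (\<Sum>j\<le>Suc n. smult (d j) (lprod c j)) (Suc n) = 0"
    using Suc.prems(1) by (simp only:) simp
  ultimately have dS: "d (Suc n) = 0" by simp
  have h: "(\<Sum>j\<le>n. smult (d j) (lprod c j)) = 0"
    using Suc.prems(1) dS by (simp only: sum.atMost_Suc) simp
  show ?case
  proof (cases "j = Suc n")
    case True thus ?thesis using dS by simp
  next
    case False
    hence "j \<le> n" using Suc.prems(2) by simp
    thus ?thesis using Suc.IH[OF h] by blast
  qed
qed

definition G :: "'a::comm_ring_1 \<Rightarrow> 'a \<Rightarrow> nat \<Rightarrow> nat \<Rightarrow> 'a" where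
  "G p q n m = (\<Sum>S\<in>sub n m. \<Prod>i\<in>S. Fib p q (staircase i))"

lemma G_0: "G p q n 0 = 1" unfolding G_def sub_0 by simp
lemma G_big: "m > n \<Longrightarrow> G p q n m = 0" unfolding G_def using sub_big by simp
lemma G_Suc: "G p q (Suc n) (Suc m) = G p q n (Suc m) + Fib p q n * G p q n m"
proof -
  have "(\<Sum>S\<in>sub n m. \<Prod>i\<in>insert (Suc n) S. Fib p q (staircase i))
      = (\<Sum>S\<in>sub n m. Fib p q n * (\<Prod>i\<in>S. Fib p q (staircase i)))"
  proof (rule sum.cong, rule refl)
    fix S assume S: "S \<in> sub n m"
    have Ssub: "S \<subseteq> {1..n}" using S unfolding sub_def by blast
    have "finite S" by (rule sub_elem_finite[OF S])
    moreover have "Suc n \<notin> S" using Ssub by auto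
    ultimately show "(\<Prod>i\<in>insert (Suc n) S. Fib p q (staircase i)) = Fib p q n * (\<Prod>i\<in>S. Fib p q (staircase i))"
      by (simp add: staircase_def)
  qed
  thus ?thesis unfolding G_def sum_sub_Suc by (simp add: sum_distrib_left)
qed

lemma cf_G: "k \<le> n \<Longrightarrow> coeff (rise_F p q n) k = G p q n (n - k)"
proof (induction n arbitrary: k)
  case 0 thus ?case by (simp add: rise_F_def G_0)
next
  case (Suc n)
  have rS: "rise_F p q (Suc n) = rise_F p q n * [:Fib p q n, 1:]"
    unfolding rise_F_def by simp
  show ?case
  proof (cases k)
    case 0
    have "coeff (rise_F p q (Suc n)) k = Fib p q n * coeff (rise_F p q n) 0"
      unfolding rS 0 by (rule coeff_mult_lin0)
    also have "coeff (rise_F p q n) 0 = G p q n n" using Suc.IH[of 0] by simp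
    also have "Fib p q n * G p q n n = G p q (Suc n) (Suc n)"
      using G_Suc[of p q n n] G_big[of n "Suc n" p q] by simp
    finally show ?thesis using 0 by simp
  next
    case (Suc k')
    show ?thesis
    proof (cases "k' = n")
      case True
      have "coeff (rise_F p q (Suc n)) (Suc n) = 1"
        using coeff_lprod_top[of "Fib p q" "Suc n"] unfolding lprod_def rise_F_def .
      moreover have "G p q (Suc n) 0 = 1" by (rule G_0)
      ultimately show ?thesis using True \<open>k = Suc k'\<close> by simp
    next
      case False
      hence k': "Suc k' \<le> n" using Suc.prems \<open>k = Suc k'\<close> by auto
      have eq: "Suc n - k = Suc (n - Suc k')" using k' \<open>k = Suc k'\<close> by simp
      have e2: "n - k' = Suc (n - Suc k')" using k' by simp
      have "coeff (rise_F p q (Suc n)) k = Fib p q n * coeff (rise_F p q n) (Suc k') + coeff (rise_F p q n) k'"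
        unfolding rS \<open>k = Suc k'\<close> by (rule coeff_mult_linS)
      also have "\<dots> = Fib p q n * G p q n (n - Suc k') + G p q n (Suc (n - Suc k'))"
        using Suc.IH[OF k'] Suc.IH[of k', unfolded e2] k' by simp
      also have "\<dots> = G p q (Suc n) (Suc (n - Suc k'))" unfolding G_Suc by (rule add.commute)
      also have "\<dots> = G p q (Suc n) (Suc n - k)" using eq by simp
      finally show ?thesis .
    qed
  qed
qed


definition R :: "'a::comm_ring_1 \<Rightarrow> 'a \<Rightarrow> nat \<Rightarrow> nat \<Rightarrow> 'a" where
  "R p q n m = (\<Sum>S\<in>sub n m. \<Prod>i\<in>S. Fib p q (staircase (i - card {j\<in>S. j < i})))"

lemma R_0: "R p q n 0 = 1" unfolding R_def sub_0 by simp
lemma R_big: "m > n \<Longrightarrow> R p q n m = 0" unfolding R_def using sub_big by simp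
lemma R_Suc: "R p q (Suc n) (Suc m) = R p q n (Suc m) + Fib p q (n - m) * R p q n m"
proof -
  have "(\<Sum>S\<in>sub n m. \<Prod>i\<in>insert (Suc n) S. Fib p q (staircase (i - card {j\<in>insert (Suc n) S. j < i})))
      = (\<Sum>S\<in>sub n m. Fib p q (n - m) * (\<Prod>i\<in>S. Fib p q (staircase (i - card {j\<in>S. j < i}))))"
  proof (rule sum.cong, rule refl)
    fix S assume S: "S \<in> sub n m"
    have Ssub: "S \<subseteq> {1..n}" and cS: "card S = m" using S unfolding sub_def by blast+
    have fS: "finite S" by (rule sub_elem_finite[OF S])
    have nS: "Suc n \<notin> S" using Ssub by auto
    have c1: "{j\<in>insert (Suc n) S. j < Suc n} = S" using Ssub by auto
    have c2: "{j\<in>insert (Suc n) S. j < i} = {j\<in>S. j < i}" if "i \<in> S" for i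
      using that Ssub by auto
    have "(\<Prod>i\<in>insert (Suc n) S. Fib p q (staircase (i - card {j\<in>insert (Suc n) S. j < i})))
        = Fib p q (staircase (Suc n - card {j\<in>insert (Suc n) S. j < Suc n})) *
          (\<Prod>i\<in>S. Fib p q (staircase (i - card {j\<in>insert (Suc n) S. j < i})))"
      using fS nS by simp
    also have "\<dots> = Fib p q (n - m) * (\<Prod>i\<in>S. Fib p q (staircase (i - card {j\<in>S. j < i})))"
      using c1 c2 cS by (simp add: staircase_def)
    finally show "(\<Prod>i\<in>insert (Suc n) S. Fib p q (staircase (i - card {j\<in>insert (Suc n) S. j < i})))
        = Fib p q (n - m) * (\<Prod>i\<in>S. Fib p q (staircase (i - card {j\<in>S. j < i})))" .
  qed
  note ins = this
  have "R p q (Suc n) (Suc m) = (\<Sum>S\<in>sub n (Suc m). \<Prod>i\<in>S. Fib p q (staircase (i - card {j\<in>S. j < i})))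
     + (\<Sum>S\<in>sub n m. \<Prod>i\<in>insert (Suc n) S. Fib p q (staircase (i - card {j\<in>insert (Suc n) S. j < i})))"
    unfolding R_def by (rule sum_sub_Suc)
  also have "\<dots> = R p q n (Suc m) + Fib p q (n - m) * R p q n m"
    unfolding ins R_def sum_distrib_left ..
  finally show ?thesis .
qed

fun sS :: "'a::comm_ring_1 \<Rightarrow> 'a \<Rightarrow> nat \<Rightarrow> nat \<Rightarrow> 'a" where
  "sS p q 0 j = (if j = 0 then 1 else 0)"
| "sS p q (Suc n) 0 = 0"
| "sS p q (Suc n) (Suc j) = sS p q n j + Fib p q (Suc j) * sS p q n (Suc j)"

lemma sS_big: "j > n \<Longrightarrow> sS p q n j = 0"
proof (induction n arbitrary: j)
  case 0 thus ?case by simp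
next
  case (Suc n)
  then obtain j' where "j = Suc j'" by (cases j) auto
  thus ?case using Suc by simp
qed

lemma sS_diag: "sS p q n n = 1"
  by (induction n) (simp_all add: sS_big)

lemma fall_lprod: "fall_F p q k = lprod (\<lambda>i. - Fib p q i) k"
  unfolding fall_F_def lprod_def by simp

lemma x_fall: "[:0, 1:] * fall_F p q j = fall_F p q (Suc j) + smult (Fib p q j) (fall_F p q j)"
proof -
  have "fall_F p q (Suc j) = fall_F p q j * [:- Fib p q j, 1:]" unfolding fall_F_def by simp
  also have "\<dots> = fall_F p q j * [:0, 1:] - smult (Fib p q j) (fall_F p q j)"
    by (simp add: mult_pCons_right algebra_simps)
  finally show ?thesis by (simp add: algebra_simps)
qed

lemma sS_expand: "[:0, 1:] ^ n = (\<Sum>j\<le>n. smult (sS p q n j) (fall_F p q j))"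
proof (induction n)
  case 0 thus ?case by (simp add: fall_F_def)
next
  case (Suc n)
  let ?f = "fall_F p q" and ?s = "sS p q n" and ?F = "Fib p q"
  have "[:0, 1:] ^ Suc n = (\<Sum>j\<le>n. smult (?s j) ([:0, 1:] * ?f j))"
    using Suc by (simp add: sum_distrib_left mult_smult_right)
  also have "\<dots> = (\<Sum>j\<le>n. smult (?s j) (?f (Suc j))) + (\<Sum>j\<le>n. smult (?F j * ?s j) (?f j))"
    unfolding x_fall by (simp add: smult_add_right sum.distrib mult.commute)
  also have "(\<Sum>j\<le>n. smult (?F j * ?s j) (?f j)) = (\<Sum>j\<le>Suc n. smult (?F j * ?s j) (?f j))"
    by (simp add: sS_big)
  also have "\<dots> = (\<Sum>j\<le>n. smult (?F (Suc j) * ?s (Suc j)) (?f (Suc j)))"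
    by (subst sum.atMost_Suc_shift) (simp add: Fib_0)
  also have "(\<Sum>j\<le>n. smult (?s j) (?f (Suc j))) + \<dots> = (\<Sum>j\<le>n. smult (sS p q (Suc n) (Suc j)) (?f (Suc j)))"
    by (simp add: sum.distrib[symmetric] smult_add_left)
  also have "\<dots> = (\<Sum>j\<le>Suc n. smult (sS p q (Suc n) j) (?f j))"
    by (simp only: sum.atMost_Suc_shift sS.simps) simp
  finally show ?case .
qed

lemma Sf_sS: "Sf p q n = sS p q n"
  unfolding Sf_def
proof (rule the_equality)
  show "(\<forall>j>n. sS p q n j = 0) \<and> [:0, 1:] ^ n = (\<Sum>j\<le>n. smult (sS p q n j) (fall_F p q j))"
    using sS_big sS_expand by blast
next
  fix s assume a: "(\<forall>j>n. s j = 0) \<and> [:0, 1:] ^ n = (\<Sum>j\<le>n. smult (s j) (fall_F p q j))"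
  have "(\<Sum>j\<le>n. smult (s j - sS p q n j) (lprod (\<lambda>i. - Fib p q i) j)) = 0"
    using a sS_expand[of n p q]
    by (simp add: smult_diff_left sum_subtractf fall_lprod[symmetric])
  hence "s j = sS p q n j" if "j \<le> n" for j using lprod_indep that by fastforce
  thus "s = sS p q n" using a sS_big by (metis ext not_le)
qed

lemma sS_R: "k \<le> n \<Longrightarrow> sS p q n k = R p q n (n - k)"
proof (induction n arbitrary: k)
  case 0 thus ?case by (simp add: R_0)
next
  case (Suc n)
  show ?case
  proof (cases k)
    case 0
    have "R p q (Suc n) (Suc n) = R p q n (Suc n) + Fib p q (n - n) * R p q n n" by (rule R_Suc)
    thus ?thesis using 0 by (simp add: R_big Fib_0)
  next
    case (Suc k')
    show ?thesis
    proof (cases "k' = n")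
      case True
      thus ?thesis using Suc by (simp add: R_0 sS_big sS_diag)
    next
      case False
      hence k': "Suc k' \<le> n" using Suc.prems \<open>k = Suc k'\<close> by auto
      have eq: "Suc n - k = Suc (n - Suc k')" using k' \<open>k = Suc k'\<close> by simp
      have e2: "n - k' = Suc (n - Suc k')" using k' by simp
      have e3: "n - (n - Suc k') = Suc k'" using k' by simp
      have "sS p q (Suc n) k = sS p q n k' + Fib p q (Suc k') * sS p q n (Suc k')"
        using \<open>k = Suc k'\<close> by simp
      also have "\<dots> = R p q n (Suc (n - Suc k')) + Fib p q (Suc k') * R p q n (n - Suc k')"
        using Suc.IH[OF k'] Suc.IH[of k', unfolded e2] k' by simp
      also have "\<dots> = R p q (Suc n) (Suc (n - Suc k'))" unfolding R_Suc e3 ..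
      also have "\<dots> = R p q (Suc n) (Suc n - k)" using eq by simp
      finally show ?thesis .
    qed
  qed
qed

theorem mainTheorem5:
  fixes p q :: "'a::comm_ring_1" and n k :: nat
  assumes "k \<le> n"
  shows "cf p q n k = fT n staircase (n - k) p q \<and> Sf p q n k = rT n staircase (n - k) p q"
  using cf_G[OF assms, of p q] sS_R[OF assms, of p q]
  unfolding cf_def Sf_sS fT_sub rT_sub G_def R_def by simp

end
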